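(* There exists a constant $C_0>0$, independent of $P$, $T$ and $\Delta$ (it may depend on $\lambda_1,\lambda_2$), such that for all $P>0$, $\Delta>0$, $T\in\mathbb{N}$, the quantizer $q_r$ satisfies $$\mathbb{E}[r_{\rm loss}]\le \log_2\Big(1+C_0\,P\,\max\{e^{-T\Delta/\lambda_1},\Delta\}\Big).$$
   Context: $H_1,H_2$ are independent exponential random variables with means $\lambda_1\ge\lambda_2>0$ (density $e^{-x/\lambda_i}/\lambda_i$, $x>0$); $P>0$ is the total power. For $a\ge b\ge0$ with $a>0$ let $A(a,b)=\frac{2b}{\sqrt{(a+b)^2+4ab^2P}+a+b}$. Full-CSI maximum minimum rate: $r_{\max}=\log_2(1+PH_1A(H_1,H_2))$ if $H_1\ge H_2$ and $r_{\max}=\log_2(1+PH_2A(H_2,H_1))$ if $H_1<H_2$. Quantizer: $q_r(x)=\lfloor x/\Delta\rfloor\Delta$ for $x\le T\Delta$, $q_r(x)=T\Delta$ for $x>T\Delta$. Let $a_i=q_r(H_i)$; if $a_1\ge a_2$ let $(s,w)=(1,2)$, otherwise $(s,w)=(2,1)$. Power fraction for the stronger receiver's message: $\alpha_q=A(a_s,a_w)$ if $a_1,a_2>0$, else $\alpha_q=0$. Adapted rates: $r_{s,q}=\log_2(1+P\alpha_qa_s)$, $r_{w,q}=\log_2\big(1+\frac{Pa_w(1-\alpha_q)}{Pa_w\alpha_q+1}\big)$. Rate loss: $r_{\rm loss}=r_{\max}-\min\{r_{1,q},r_{2,q}\}$. *)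

theory Defs
  imports "HOL-Probability.Probability"
begin

definition exp_dens :: "real \<Rightarrow> real \<Rightarrow> real" where
  "exp_dens lam x = (if x > 0 then exp (- x / lam) / lam else 0)"

definition chan_law :: "real \<Rightarrow> real \<Rightarrow> (real \<times> real) measure" where
  "chan_law l1 l2 = density lborel (\<lambda>x. ennreal (exp_dens l1 x))
                     \<Otimes>\<^sub>M density lborel (\<lambda>x. ennreal (exp_dens l2 x))"

definition Afrac :: "real \<Rightarrow> real \<Rightarrow> real \<Rightarrow> real" where
  "Afrac P a b = 2 * b / (sqrt ((a + b)^2 + 4 * a * b^2 * P) + a + b)"

definition r_max :: "real \<Rightarrow> real \<Rightarrow> real \<Rightarrow> real" where
  "r_max P h1 h2 = (if h1 \<ge> h2 then log 2 (1 + P * h1 * Afrac P h1 h2)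
                    else log 2 (1 + P * h2 * Afrac P h2 h1))"

definition q_r :: "nat \<Rightarrow> real \<Rightarrow> real \<Rightarrow> real" where
  "q_r T \<Delta> x = (if x \<le> real T * \<Delta> then real_of_int \<lfloor>x / \<Delta>\<rfloor> * \<Delta> else real T * \<Delta>)"

definition rates_q :: "real \<Rightarrow> nat \<Rightarrow> real \<Rightarrow> real \<Rightarrow> real \<Rightarrow> real \<times> real" where
  "rates_q P T \<Delta> h1 h2 =
     (let a1 = q_r T \<Delta> h1; a2 = q_r T \<Delta> h2;
          as = (if a1 \<ge> a2 then a1 else a2);
          aw = (if a1 \<ge> a2 then a2 else a1);
          \<alpha> = (if a1 > 0 \<and> a2 > 0 then Afrac P as aw else 0);
          rs = log 2 (1 + P * \<alpha> * as);
          rw = log 2 (1 + P * aw * (1 - \<alpha>) / (P * aw * \<alpha> + 1))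
      in if a1 \<ge> a2 then (rs, rw) else (rw, rs))"

definition r_loss :: "real \<Rightarrow> nat \<Rightarrow> real \<Rightarrow> real \<Rightarrow> real \<Rightarrow> real" where
  "r_loss P T \<Delta> h1 h2 = r_max P h1 h2 - min (fst (rates_q P T \<Delta> h1 h2)) (snd (rates_q P T \<Delta> h1 h2))"

end

theory Submission
  imports Defs
begin


definition Yf :: "real \<Rightarrow> real \<Rightarrow> real \<Rightarrow> real" where
  "Yf P a b = P * a * Afrac P a b"

lemma Yf_eq:
  assumes P: "P > 0" and a: "a > 0" and b: "b > 0"
  shows "Yf P a b \<ge> 0 \<and> Yf P a b * (Yf P a b + 1) / a + Yf P a b / b = P"
proof -
  define S where "S = sqrt ((a + b)^2 + 4 * a * b^2 * P)"
  have S2: "S^2 = (a + b)^2 + 4 * a * b^2 * P" unfolding S_def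
    using a b P by (simp add: zero_le_mult_iff)
  have Sge: "S \<ge> a + b" unfolding S_def
    using a b P by (intro real_le_rsqrt) (simp add: zero_le_mult_iff)
  have Y: "Yf P a b = P * a * (2 * b) / (S + a + b)"
    unfolding Yf_def Afrac_def S_def by simp
  have "Yf P a b * (2 * b) = S - a - b"
  proof -
    have "P * a * (2 * b) * (2*b) = (S - a - b) * (S + a + b)"
      using S2 by (simp add: algebra_simps power2_eq_square)
    moreover have "Yf P a b * (S + a + b) = P * a * (2 * b)" using Y Sge a b by (simp add: field_simps)
    ultimately have "(Yf P a b * (2 * b)) * (S + a + b) = (S - a - b) * (S + a + b)"
      by (simp add: algebra_simps)
    moreover have "S + a + b > 0" using Sge a b by simp
    ultimately show ?thesis by simp
  qed
  then have y: "Yf P a b = (S - a - b) / (2 * b)" using b by (simp add: field_simps)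
  have "Yf P a b \<ge> 0" using y Sge b by simp
  moreover have "Yf P a b * (Yf P a b + 1) / a + Yf P a b / b = P"
  proof -
    have "(2 * b * Yf P a b + a + b)^2 = S^2" using y b by (simp add: field_simps)
    then have "(2 * b * Yf P a b + a + b)^2 = (a + b)^2 + 4 * a * b^2 * P" using S2 by simp
    then have "4 * b * (Yf P a b * (Yf P a b + 1) * b + Yf P a b * a) = 4 * b * (P * a * b)"
      by (simp add: algebra_simps power2_eq_square)
    moreover have nz: "4 * b \<noteq> 0" using b by simp
    ultimately have "Yf P a b * (Yf P a b + 1) * b + Yf P a b * a = P * a * b"
      using mult_left_cancel[OF nz] by blast
    then show ?thesis using a b by (simp add: field_simps)
  qed
  ultimately show ?thesis by blast
qed

lemma phi_mono:
  fixes a b y w :: real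
  assumes a: "a > 0" and b: "b > 0" and y: "y \<ge> 0" and w: "w \<ge> 0"
    and le: "y * (y + 1) / a + y / b \<le> w * (w + 1) / a + w / b"
  shows "y \<le> w"
proof (rule ccontr)
  assume "\<not> y \<le> w"
  then have "w < y" by simp
  then have "w * (w + 1) < y * (y + 1)" using w by (intro mult_strict_mono) auto
  then have "w * (w + 1) / a < y * (y + 1) / a" using a by (simp add: divide_strict_right_mono)
  moreover have "w / b < y / b" using \<open>w < y\<close> b by (simp add: divide_strict_right_mono)
  ultimately show False using le by simp
qed

lemma Lip1:
  assumes P: "P > 0" and a: "a' > 0" and aa: "a' \<le> a" and b: "b > 0"
  shows "Yf P a b \<le> Yf P a' b + P * (a - a')"
proof -
  define v where "v = Yf P a' b"
  define w where "w = v + P * (a - a')"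
  have a0: "a > 0" using a aa by simp
  have ev: "v \<ge> 0" "v * (v + 1) / a' + v / b = P" using Yf_eq[OF P a b] v_def by auto
  have eu: "Yf P a b \<ge> 0" "Yf P a b * (Yf P a b + 1) / a + Yf P a b / b = P" using Yf_eq[OF P a0 b] by auto
  have w0: "w \<ge> 0" using ev aa P w_def by simp
  have k1: "v * (v + 1) / a' \<le> P" using ev b by (smt (verit) divide_nonneg_pos)
  have "w * (w + 1) \<ge> v * (v + 1) + P * (a - a')"
  proof -
    have "w * (w + 1) = v * (v + 1) + P * (a - a') * (2 * v) + P * (a - a') + (P * (a - a'))^2"
      unfolding w_def by (simp add: algebra_simps power2_eq_square)
    moreover have "P * (a - a') * (2 * v) \<ge> 0" using ev P aa by simp
    moreover have "(P * (a - a'))^2 \<ge> 0" by simp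
    ultimately show ?thesis by linarith
  qed
  then have "w * (w + 1) / a \<ge> (v * (v + 1) + P * (a - a')) / a" using a0 by (simp add: divide_right_mono)
  moreover have "v * (v + 1) / a' = v * (v + 1) / a + v * (v + 1) * (a - a') / (a * a')"
    using a a0 by (simp add: field_simps)
  moreover have "v * (v + 1) * (a - a') / (a * a') \<le> P * (a - a') / a"
  proof -
    have "v * (v + 1) * (a - a') / (a * a') = (v * (v + 1) / a') * ((a - a') / a)" by simp
    also have "\<dots> \<le> P * ((a - a') / a)" using k1 aa a0 by (intro mult_right_mono) auto
    finally show ?thesis by simp
  qed
  moreover have "w / b \<ge> v / b" using w_def P aa b by (simp add: divide_right_mono)
  ultimately have "w * (w + 1) / a + w / b \<ge> P" using ev(2) by (simp add: add_divide_distrib)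
  then show ?thesis using phi_mono[OF a0 b eu(1) w0] eu(2) w_def v_def by simp
qed

lemma Lip2:
  assumes P: "P > 0" and a: "a > 0" and b: "b' > 0" and bb: "b' \<le> b"
  shows "Yf P a b \<le> Yf P a b' + P * (b - b')"
proof -
  define v where "v = Yf P a b'"
  define w where "w = v + P * (b - b')"
  have b0: "b > 0" using b bb by simp
  have ev: "v \<ge> 0" "v * (v + 1) / a + v / b' = P" using Yf_eq[OF P a b] v_def by auto
  have eu: "Yf P a b \<ge> 0" "Yf P a b * (Yf P a b + 1) / a + Yf P a b / b = P" using Yf_eq[OF P a b0] by auto
  have w0: "w \<ge> 0" using ev bb P w_def by simp
  have k1: "v / b' \<le> P" using ev a by (smt (verit) divide_nonneg_pos mult_nonneg_nonneg)
  have "w * (w + 1) \<ge> v * (v + 1)" unfolding w_def using ev P bb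
    by (intro mult_mono) auto
  then have A1: "w * (w + 1) / a \<ge> v * (v + 1) / a" using a by (simp add: divide_right_mono)
  have "v / b' = v / b + v * (b - b') / (b * b')" using b b0 by (simp add: field_simps)
  moreover have "v * (b - b') / (b * b') \<le> P * (b - b') / b"
  proof -
    have "v * (b - b') / (b * b') = (v / b') * ((b - b') / b)" by simp
    also have "\<dots> \<le> P * ((b - b') / b)" using k1 bb b0 by (intro mult_right_mono) auto
    finally show ?thesis by simp
  qed
  ultimately have "w / b \<ge> v / b'" unfolding w_def by (simp add: add_divide_distrib)
  then have "w * (w + 1) / a + w / b \<ge> P" using ev(2) A1 by simp
  then show ?thesis using phi_mono[OF a b0 eu(1) w0] eu(2) w_def v_def by simp
qed


lemma Yf_le:
  assumes P: "P > 0" and a: "a > 0" and b: "b > 0"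
  shows "Yf P a b \<le> P * b"
proof -
  have e: "Yf P a b \<ge> 0" "Yf P a b * (Yf P a b + 1) / a + Yf P a b / b = P" using Yf_eq[OF P a b] by auto
  then have "Yf P a b / b \<le> P" using a by (smt (verit) divide_nonneg_pos mult_nonneg_nonneg)
  then show ?thesis using b by (simp add: divide_le_eq mult.commute)
qed

lemma rw_eq:
  assumes P: "P > 0" and a: "a1 > 0" and b: "a2 > 0"
  shows "1 + P * a2 * (1 - Afrac P a1 a2) / (P * a2 * Afrac P a1 a2 + 1) = 1 + Yf P a1 a2"
proof -
  define y where "y = Yf P a1 a2"
  have e: "y \<ge> 0" "y * (y + 1) / a1 + y / a2 = P" using Yf_eq[OF P a b] y_def by auto
  have al: "Afrac P a1 a2 = y / (P * a1)" using y_def P a unfolding Yf_def by simp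
  have d: "P * a2 * (y / (P * a1)) + 1 > 0" using P a b e
    by (intro add_nonneg_pos mult_nonneg_nonneg divide_nonneg_nonneg) auto
  have "P * a2 * (1 - y / (P * a1)) = y * (P * a2 * (y / (P * a1)) + 1)"
  proof -
    have "P * a1 * a2 = y * (y + 1) * a2 + y * a1" using e a b by (simp add: field_simps)
    then show ?thesis using P a b by (simp add: field_simps)
  qed
  moreover have gen: "\<And>X D z::real. X = z * D \<Longrightarrow> D > 0 \<Longrightarrow> X / D = z" by simp
  ultimately have "P * a2 * (1 - y / (P * a1)) / (P * a2 * (y / (P * a1)) + 1) = y"
    using d by (intro gen) auto
  then show ?thesis using al y_def by simp
qed

lemma q_nonneg: "\<Delta> > 0 \<Longrightarrow> h > 0 \<Longrightarrow> q_r T \<Delta> h \<ge> 0"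
  unfolding q_r_def by auto

lemma q_le: "\<Delta> > 0 \<Longrightarrow> h > 0 \<Longrightarrow> q_r T \<Delta> h \<le> h"
  unfolding q_r_def using floor_divide_lower[of \<Delta> h] by auto

lemma q_mono:
  assumes "\<Delta> > 0" "h2 \<le> h1"
  shows "q_r T \<Delta> h2 \<le> q_r T \<Delta> h1"
proof -
  have fm: "real_of_int \<lfloor>h2 / \<Delta>\<rfloor> \<le> real_of_int \<lfloor>h1 / \<Delta>\<rfloor>"
    using assms by (simp only: of_int_le_iff, intro floor_mono divide_right_mono) auto
  have "real_of_int \<lfloor>h2 / \<Delta>\<rfloor> * \<Delta> \<le> h2" using floor_divide_lower[of \<Delta> h2] assms by simp
  moreover have "h2 \<le> real T * \<Delta> \<Longrightarrow> real_of_int \<lfloor>h2 / \<Delta>\<rfloor> \<le> real T"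
  proof -
    assume "h2 \<le> real T * \<Delta>"
    then have "h2 / \<Delta> \<le> real T" using assms by (simp add: divide_le_eq)
    then show ?thesis by linarith
  qed
  ultimately show ?thesis unfolding q_r_def using assms fm by (auto intro: mult_right_mono)
qed

lemma q_main:
  assumes "\<Delta> > 0" "h \<le> real T * \<Delta>" "h \<ge> \<Delta>"
  shows "q_r T \<Delta> h > 0 \<and> h - q_r T \<Delta> h < \<Delta>"
proof -
  have "h / \<Delta> \<ge> 1" using assms by simp
  then have "\<lfloor>h / \<Delta>\<rfloor> \<ge> 1" by linarith
  moreover have "h < (real_of_int \<lfloor>h / \<Delta>\<rfloor> + 1) * \<Delta>" using floor_divide_upper[of \<Delta> h] assms by simp
  ultimately show ?thesis unfolding q_r_def using assms by (auto simp: algebra_simps)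
qed

lemma loss_form:
  assumes P: "P > 0" and D: "\<Delta> > 0" and h: "h2 > 0" "h2 \<le> h1"
  shows "r_loss P T \<Delta> h1 h2 = log 2 (1 + Yf P h1 h2) -
     (if q_r T \<Delta> h2 > 0 then log 2 (1 + Yf P (q_r T \<Delta> h1) (q_r T \<Delta> h2)) else 0)"
proof -
  define a1 where "a1 = q_r T \<Delta> h1"
  define a2 where "a2 = q_r T \<Delta> h2"
  have a12: "a2 \<le> a1" using q_mono[OF D h(2)] a1_def a2_def by simp
  have a2n: "a2 \<ge> 0" using q_nonneg[OF D h(1)] a2_def by simp
  have rm: "r_max P h1 h2 = log 2 (1 + Yf P h1 h2)" unfolding r_max_def Yf_def using h by simp
  show ?thesis
  proof (cases "a2 > 0")
    case True
    then have a1p: "a1 > 0" using a12 by simp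
    have "rates_q P T \<Delta> h1 h2 = (log 2 (1 + Yf P a1 a2), log 2 (1 + Yf P a1 a2))"
      unfolding rates_q_def Let_def a1_def[symmetric] a2_def[symmetric]
      using a12 True a1p rw_eq[OF P a1p True]
      by (simp add: Yf_def algebra_simps)
    then show ?thesis unfolding r_loss_def rm using True a1_def a2_def by simp
  next
    case False
    then have "a2 = 0" using a2n by simp
    then have "rates_q P T \<Delta> h1 h2 = (0, 0)"
      unfolding rates_q_def Let_def a1_def[symmetric] a2_def[symmetric]
      using a12 by simp
    then show ?thesis unfolding r_loss_def rm using False a1_def a2_def by simp
  qed
qed



lemma log2_mono1: "0 \<le> x \<Longrightarrow> x \<le> y \<Longrightarrow> log 2 (1 + x) \<le> log 2 (1 + y)"
  by simp

lemma log2_nn: "0 \<le> x \<Longrightarrow> 0 \<le> log 2 (1 + x)"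
  by simp

definition gfun :: "nat \<Rightarrow> real \<Rightarrow> real \<Rightarrow> real \<Rightarrow> real" where
  "gfun T \<Delta> h1 h2 = 2 * \<Delta> + \<bar>h2\<bar> * indicator {real T * \<Delta><..} h1 + \<bar>h1\<bar> * indicator {real T * \<Delta><..} h2"

lemma gfun_sym: "gfun T \<Delta> h1 h2 = gfun T \<Delta> h2 h1"
  unfolding gfun_def by simp

lemma pw_ord:
  assumes P: "P > 0" and D: "\<Delta> > 0" and h: "h2 > 0" "h2 \<le> h1"
  shows "\<bar>r_loss P T \<Delta> h1 h2\<bar> \<le> log 2 (1 + P * h2) \<and> r_loss P T \<Delta> h1 h2 \<le> log 2 (1 + P * gfun T \<Delta> h1 h2)"
proof -
  define a1 where "a1 = q_r T \<Delta> h1"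
  define a2 where "a2 = q_r T \<Delta> h2"
  have h1p: "h1 > 0" using h by simp
  have a12: "a2 \<le> a1" using q_mono[OF D h(2)] a1_def a2_def by simp
  have a2h: "a2 \<le> h2" using q_le[OF D h(1)] a2_def by simp
  have a1h: "a1 \<le> h1" using q_le[OF D h1p] a1_def by simp
  have lf: "r_loss P T \<Delta> h1 h2 = log 2 (1 + Yf P h1 h2) - (if a2 > 0 then log 2 (1 + Yf P a1 a2) else 0)"
    using loss_form[OF P D h] a1_def a2_def by simp
  have Yh: "0 \<le> Yf P h1 h2" "Yf P h1 h2 \<le> P * h2" using Yf_eq[OF P h1p h(1)] Yf_le[OF P h1p h(1)] by auto
  have L1: "0 \<le> log 2 (1 + Yf P h1 h2)" "log 2 (1 + Yf P h1 h2) \<le> log 2 (1 + P * h2)"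
    using Yh by auto
  have Pg: "P * h2 \<le> P * gfun T \<Delta> h1 h2" if "h1 > real T * \<Delta>"
    using that P h D unfolding gfun_def by (simp add: indicator_def)
  have gD: "2 * \<Delta> \<le> gfun T \<Delta> h1 h2" unfolding gfun_def by (simp add: indicator_def)
  show ?thesis
  proof (cases "a2 > 0")
    case True
    then have a1p: "a1 > 0" using a12 by simp
    have Yb: "0 \<le> Yf P a1 a2" "Yf P a1 a2 \<le> P * h2"
      using Yf_eq[OF P a1p True] Yf_le[OF P a1p True] a2h P by (auto intro: order_trans[OF _ mult_left_mono])
    have L2: "0 \<le> log 2 (1 + Yf P a1 a2)" "log 2 (1 + Yf P a1 a2) \<le> log 2 (1 + P * h2)"
      using Yb by auto
    have ab: "\<bar>r_loss P T \<Delta> h1 h2\<bar> \<le> log 2 (1 + P * h2)" using lf True L1 L2 by simp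
    have up: "r_loss P T \<Delta> h1 h2 \<le> log 2 (1 + P * gfun T \<Delta> h1 h2)"
    proof (cases "h1 > real T * \<Delta>")
      case True
      then show ?thesis using ab Pg[OF True] P h by (smt (verit) log2_mono1 mult_pos_pos)
    next
      case False
      then have h1T: "h1 \<le> real T * \<Delta>" by simp
      have h2T: "h2 \<le> real T * \<Delta>" using h1T h by simp
      show ?thesis
      proof (cases "h2 \<ge> \<Delta>")
        case False
        have "r_loss P T \<Delta> h1 h2 \<le> log 2 (1 + P * h2)" using ab by simp
        also have "\<dots> \<le> log 2 (1 + P * gfun T \<Delta> h1 h2)"
          using False gD P h D by (intro log2_mono1) (auto intro: mult_left_mono)
        finally show ?thesis .
      next
        case True
        have h1D: "h1 \<ge> \<Delta>" using True h by simp
        have m1: "h1 - a1 < \<Delta>" using q_main[OF D h1T h1D] a1_def by simp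
        have m2: "h2 - a2 < \<Delta>" using q_main[OF D h2T True] a2_def by simp
        have "Yf P h1 h2 \<le> Yf P a1 h2 + P * (h1 - a1)" using Lip1[OF P a1p a1h h(1)] .
        also have "Yf P a1 h2 \<le> Yf P a1 a2 + P * (h2 - a2)" using Lip2[OF P a1p \<open>a2 > 0\<close> a2h] .
        finally have "Yf P h1 h2 \<le> Yf P a1 a2 + P * (h1 - a1) + P * (h2 - a2)" by simp
        moreover have "P * (h1 - a1) \<le> P * \<Delta>" "P * (h2 - a2) \<le> P * \<Delta>"
          using m1 m2 P by auto
        ultimately have Yhb: "Yf P h1 h2 \<le> Yf P a1 a2 + 2 * P * \<Delta>" by simp
        have "1 + Yf P h1 h2 \<le> (1 + Yf P a1 a2) * (1 + 2 * P * \<Delta>)"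
        proof -
          have "(1 + Yf P a1 a2) * (1 + 2 * P * \<Delta>) = 1 + Yf P a1 a2 + 2 * P * \<Delta> + Yf P a1 a2 * (2 * P * \<Delta>)"
            by (simp add: algebra_simps)
          moreover have "Yf P a1 a2 * (2 * P * \<Delta>) \<ge> 0" using Yb P D by simp
          ultimately show ?thesis using Yhb by linarith
        qed
        moreover have pd: "0 < 1 + 2 * P * \<Delta>" using P D by (smt (verit) mult_pos_pos)
        ultimately have "log 2 (1 + Yf P h1 h2) \<le> log 2 ((1 + Yf P a1 a2) * (1 + 2 * P * \<Delta>))"
          using Yh Yb P D pd by (subst log_le_cancel_iff) auto
        also have "\<dots> = log 2 (1 + Yf P a1 a2) + log 2 (1 + 2 * P * \<Delta>)"
          using Yb P D pd by (subst log_mult) auto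
        finally have "r_loss P T \<Delta> h1 h2 \<le> log 2 (1 + 2 * P * \<Delta>)" using lf \<open>a2 > 0\<close> by simp
        also have "\<dots> \<le> log 2 (1 + P * gfun T \<Delta> h1 h2)"
          using gD P D by (intro log2_mono1) (auto simp: mult.assoc intro: mult_left_mono)
        finally show ?thesis .
      qed
    qed
    show ?thesis using ab up by simp
  next
    case False
    have ab: "\<bar>r_loss P T \<Delta> h1 h2\<bar> \<le> log 2 (1 + P * h2)" using lf False L1 by simp
    have "r_loss P T \<Delta> h1 h2 \<le> log 2 (1 + P * gfun T \<Delta> h1 h2)"
    proof (cases "h1 > real T * \<Delta>")
      case True
      then show ?thesis using ab Pg[OF True] P h by (smt (verit) log2_mono1 mult_pos_pos)
    next
      case F2: False
      have "h2 < \<Delta>"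
      proof (rule ccontr)
        assume "\<not> h2 < \<Delta>"
        then have "a2 > 0" using q_main[OF D _ , of h2] F2 h a2_def by simp
        then show False using False by simp
      qed
      have "r_loss P T \<Delta> h1 h2 \<le> log 2 (1 + P * h2)" using ab by simp
      also have "\<dots> \<le> log 2 (1 + P * gfun T \<Delta> h1 h2)"
        using \<open>h2 < \<Delta>\<close> gD P h D by (intro log2_mono1) (auto intro: mult_left_mono)
      finally show ?thesis .
    qed
    then show ?thesis using ab by simp
  qed
qed

lemma r_max_sym: "r_max P h1 h2 = r_max P h2 h1"
  unfolding r_max_def by auto

lemma rates_min_sym:
  "min (fst (rates_q P T \<Delta> h1 h2)) (snd (rates_q P T \<Delta> h1 h2)) =
   min (fst (rates_q P T \<Delta> h2 h1)) (snd (rates_q P T \<Delta> h2 h1))"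
  unfolding rates_q_def Let_def
  by (cases "q_r T \<Delta> h1 < q_r T \<Delta> h2"; cases "q_r T \<Delta> h2 < q_r T \<Delta> h1") (auto simp: min.commute)

lemma r_loss_sym: "r_loss P T \<Delta> h1 h2 = r_loss P T \<Delta> h2 h1"
  unfolding r_loss_def using r_max_sym rates_min_sym by metis

lemma pw:
  assumes P: "P > 0" and D: "\<Delta> > 0" and h: "h1 > 0" "h2 > 0"
  shows "\<bar>r_loss P T \<Delta> h1 h2\<bar> \<le> P * (h1 + h2) / ln 2 \<and> r_loss P T \<Delta> h1 h2 \<le> log 2 (1 + P * gfun T \<Delta> h1 h2)"
proof -
  have key: "\<bar>r_loss P T \<Delta> h1 h2\<bar> \<le> log 2 (1 + P * min h1 h2) \<and> r_loss P T \<Delta> h1 h2 \<le> log 2 (1 + P * gfun T \<Delta> h1 h2)"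
  proof (cases "h2 \<le> h1")
    case True
    then have "min h1 h2 = h2" by simp
    then show ?thesis using pw_ord[OF P D h(2) True] by simp
  next
    case False
    then have "min h1 h2 = h1" by simp
    then show ?thesis using False pw_ord[OF P D h(1), of h2 T] r_loss_sym[of P T \<Delta> h1 h2] gfun_sym[of T \<Delta> h1 h2]
      by simp
  qed
  have "log 2 (1 + P * min h1 h2) = ln (1 + P * min h1 h2) / ln 2" by (simp add: log_def)
  also have "\<dots> \<le> (P * min h1 h2) / ln 2"
    using P h by (intro divide_right_mono ln_add_one_self_le_self) auto
  also have "\<dots> \<le> P * (h1 + h2) / ln 2"
    using P h by (intro divide_right_mono mult_left_mono) auto
  finally show ?thesis using key by simp
qed



abbreviation EM :: "real \<Rightarrow> real measure" where
  "EM l \<equiv> density lborel (\<lambda>x. ennreal (exp_dens l x))"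

lemma EM_eq:
  assumes l: "l > 0"
  shows "EM l = density lborel (exponential_density (1 / l))"
proof (rule density_cong)
  show "(\<lambda>x. ennreal (exp_dens l x)) \<in> borel_measurable lborel"
    unfolding exp_dens_def by measurable
  show "(\<lambda>x. ennreal (exponential_density (1 / l) x)) \<in> borel_measurable lborel" by measurable
  show "AE x in lborel. ennreal (exp_dens l x) = ennreal (exponential_density (1 / l) x)"
    using AE_lborel_singleton[of "0::real"]
    by eventually_elim (auto simp: exp_dens_def exponential_density_def)
qed

lemma EM_prob: "l > 0 \<Longrightarrow> prob_space (EM l)"
  using EM_eq prob_space_exponential_density[of "1/l"] by simp

lemma EM_sets: "sets (EM l) = sets borel"
  by simp

lemma EM_abs:
  assumes l: "l > 0"
  shows "(\<integral>\<^sup>+x. ennreal \<bar>x\<bar> \<partial>EM l) = ennreal l"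
proof -
  have "(\<integral>\<^sup>+x. ennreal \<bar>x\<bar> \<partial>EM l) = (\<integral>\<^sup>+x. ennreal \<bar>x\<bar> \<partial>density lborel (exponential_density (1 / l)))"
    using EM_eq[OF l] by simp
  also have "\<dots> = (\<integral>\<^sup>+x. ennreal (exponential_density (1 / l) x) * ennreal \<bar>x\<bar> \<partial>lborel)"
    by (subst nn_integral_density) auto
  also have "\<dots> = (\<integral>\<^sup>+x. ennreal (erlang_density 0 (1 / l) x * x ^ 1) \<partial>lborel)"
    using l by (intro nn_integral_cong) (auto simp: exponential_density_def ennreal_mult'[symmetric] mult.commute)
  also have "\<dots> = ennreal l"
    using l by (subst nn_integral_erlang_ith_moment) auto
  finally show ?thesis .
qed

lemma EM_tail:
  assumes l: "l > 0" and t: "t \<ge> 0"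
  shows "(\<integral>\<^sup>+x. ennreal (indicator {t<..} x) \<partial>EM l) = ennreal (exp (- t / l))"
proof -
  interpret prob_space "EM l" using EM_prob[OF l] .
  have "(\<integral>\<^sup>+x. ennreal (indicator {t<..} x) \<partial>EM l) = emeasure (EM l) {t<..}"
    by (simp add: ennreal_indicator)
  also have "\<dots> = ennreal (prob {t<..})" by (simp add: emeasure_eq_measure)
  also have "prob {t<..} = 1 - prob {..t}"
    using prob_compl[of "{..t}"] by (simp add: Compl_eq_Diff_UNIV[symmetric] Compl_atMost)
  also have "prob {..t} = 1 - exp (- t / l)"
  proof -
    have "emeasure (EM l) {..t} = ennreal (erlang_CDF 0 (1 / l) t)"
      using EM_eq[OF l] emeasure_erlang_density[of "1/l" 0 t] l by simp
    then have "prob {..t} = erlang_CDF 0 (1 / l) t"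
      using l by (simp add: emeasure_eq_measure erlang_CDF_nonneg)
    then show ?thesis using t by (simp add: erlang_CDF_0)
  qed
  finally show ?thesis by simp
qed


lemma q_meas[measurable]: "(\<lambda>x. q_r T \<Delta> x) \<in> borel_measurable borel"
  unfolding q_r_def by measurable
lemma A_meas[measurable]: "(\<lambda>x. Afrac P (f x) (g x)) \<in> borel_measurable M"
  if [measurable]: "f \<in> borel_measurable M" "g \<in> borel_measurable M"
  unfolding Afrac_def by measurable
lemma rates_meas[measurable]: "(\<lambda>x. rates_q P T \<Delta> (f x) (g x)) \<in> borel_measurable M"
  if [measurable]: "f \<in> borel_measurable M" "g \<in> borel_measurable M"
  unfolding rates_q_def Let_def by measurable
lemma rates_fst[measurable]: "(\<lambda>x. fst (rates_q P T \<Delta> (f x) (g x))) \<in> borel_measurable M"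
  if [measurable]: "f \<in> borel_measurable M" "g \<in> borel_measurable M"
  by (rule measurable_compose[OF rates_meas[OF that]]) (intro borel_measurable_continuous_onI continuous_intros)
lemma rates_snd[measurable]: "(\<lambda>x. snd (rates_q P T \<Delta> (f x) (g x))) \<in> borel_measurable M"
  if [measurable]: "f \<in> borel_measurable M" "g \<in> borel_measurable M"
  by (rule measurable_compose[OF rates_meas[OF that]]) (intro borel_measurable_continuous_onI continuous_intros)
lemma rm_meas[measurable]: "(\<lambda>x. r_max P (f x) (g x)) \<in> borel_measurable M"
  if [measurable]: "f \<in> borel_measurable M" "g \<in> borel_measurable M"
  unfolding r_max_def by measurable
lemma rl_meas: "(\<lambda>(h1, h2). r_loss P T \<Delta> h1 h2) \<in> borel_measurable (borel \<Otimes>\<^sub>M borel)"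
  unfolding r_loss_def case_prod_beta by measurable


lemma g_meas: "(\<lambda>z. gfun T \<Delta> (fst z) (snd z)) \<in> borel_measurable (borel \<Otimes>\<^sub>M borel)"
  unfolding gfun_def by measurable

lemma sets_chan: "sets (chan_law l1 l2) = sets (borel \<Otimes>\<^sub>M borel)"
  unfolding chan_law_def by (intro sets_pair_measure_cong) auto

lemma meas_chan: "f \<in> borel_measurable (borel \<Otimes>\<^sub>M borel) \<Longrightarrow> f \<in> borel_measurable (chan_law l1 l2)"
  using measurable_cong_sets[OF sets_chan refl] by blast

lemma prod_nn:
  assumes l1: "l1 > 0" and l2: "l2 > 0"
    and f: "f \<in> borel_measurable borel" and g: "g \<in> borel_measurable borel"
  shows "(\<integral>\<^sup>+z. f (fst z) * g (snd z) \<partial>chan_law l1 l2) = (\<integral>\<^sup>+x. f x \<partial>EM l1) * (\<integral>\<^sup>+y. g y \<partial>EM l2)"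
proof -
  interpret p2: prob_space "EM l2" using EM_prob[OF l2] .
  have m0: "(\<lambda>z. f (fst z) * g (snd z)) \<in> borel_measurable (borel \<Otimes>\<^sub>M borel)"
    using f g by measurable
  have m: "(\<lambda>z. f (fst z) * g (snd z)) \<in> borel_measurable (EM l1 \<Otimes>\<^sub>M EM l2)"
    using meas_chan[OF m0, of l1 l2] unfolding chan_law_def .
  have fE: "f \<in> borel_measurable (EM l1)" using f by (simp add: measurable_cong_sets[OF sets_density refl])
  have gE: "g \<in> borel_measurable (EM l2)" using g by (simp add: measurable_cong_sets[OF sets_density refl])
  have "(\<integral>\<^sup>+z. f (fst z) * g (snd z) \<partial>chan_law l1 l2) = (\<integral>\<^sup>+x. \<integral>\<^sup>+y. f x * g y \<partial>EM l2 \<partial>EM l1)"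
    unfolding chan_law_def using p2.nn_integral_fst[OF m] by simp
  also have "\<dots> = (\<integral>\<^sup>+x. f x * (\<integral>\<^sup>+y. g y \<partial>EM l2) \<partial>EM l1)"
    using gE by (intro nn_integral_cong nn_integral_cmult) auto
  also have "\<dots> = (\<integral>\<^sup>+x. f x \<partial>EM l1) * (\<integral>\<^sup>+y. g y \<partial>EM l2)"
    using fE by (intro nn_integral_multc) auto
  finally show ?thesis .
qed



lemma EM_AE_pos: "AE x in EM l. x > 0"
proof (subst AE_density)
  show "(\<lambda>x. ennreal (exp_dens l x)) \<in> borel_measurable lborel" unfolding exp_dens_def by measurable
  show "AE x in lborel. 0 < ennreal (exp_dens l x) \<longrightarrow> 0 < x"
    by (auto simp: exp_dens_def)
qed

lemma AE_pos:
  assumes l1: "l1 > 0" and l2: "l2 > 0"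
  shows "AE z in chan_law l1 l2. fst z > 0 \<and> snd z > 0"
proof -
  interpret p1: prob_space "EM l1" using EM_prob[OF l1] .
  interpret p2: prob_space "EM l2" using EM_prob[OF l2] .
  interpret pp: pair_prob_space "EM l1" "EM l2" ..
  have s: "{x \<in> space (EM l1 \<Otimes>\<^sub>M EM l2). 0 < fst x \<and> 0 < snd x} \<in> sets (EM l1 \<Otimes>\<^sub>M EM l2)"
  proof -
    have e: "{x \<in> space (EM l1 \<Otimes>\<^sub>M EM l2). 0 < fst x \<and> 0 < snd x} = {0<..} \<times> {0<..}"
      by (auto simp: space_pair_measure)
    show ?thesis unfolding e by (intro pair_measureI) auto
  qed
  have "AE x in EM l1. AE y in EM l2. 0 < fst (x, y) \<and> 0 < snd (x, y)"
    using EM_AE_pos[of l1]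
  proof eventually_elim
    case (elim x)
    show ?case using EM_AE_pos[of l2] by eventually_elim (use elim in auto)
  qed
  then show ?thesis unfolding chan_law_def by (intro pp.AE_pair_measure[OF s]) auto
qed



lemma tangent_log2:
  fixes z m :: real
  assumes "z \<ge> 0" "m \<ge> 0"
  shows "log 2 (1 + z) \<le> log 2 (1 + m) + (z - m) / ((1 + m) * ln 2)"
proof -
  have "ln ((1 + z) / (1 + m)) \<le> (1 + z) / (1 + m) - 1"
    using assms by (intro ln_le_minus_one) auto
  moreover have "ln ((1 + z) / (1 + m)) = ln (1 + z) - ln (1 + m)"
    using assms by (simp add: ln_div)
  moreover have "(1 + z) / (1 + m) - 1 = (z - m) / (1 + m)"
    using assms by (simp add: field_simps)
  ultimately have "ln (1 + z) \<le> ln (1 + m) + (z - m) / (1 + m)" by simp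
  then have "ln (1 + z) / ln 2 \<le> (ln (1 + m) + (z - m) / (1 + m)) / ln 2"
    by (intro divide_right_mono) auto
  then show ?thesis by (simp add: log_def add_divide_distrib)
qed

lemma hb_nn:
  assumes l1: "l1 > 0" and l2: "l2 > 0"
    and f: "f \<in> borel_measurable borel" and g: "g \<in> borel_measurable borel"
    and fn: "\<And>x. f x \<ge> 0" and gn: "\<And>x. g x \<ge> 0"
    and If: "(\<integral>\<^sup>+x. ennreal (f x) \<partial>EM l1) = ennreal a"
    and Ig: "(\<integral>\<^sup>+x. ennreal (g x) \<partial>EM l2) = ennreal b"
    and a: "a \<ge> 0" and b: "b \<ge> 0"
  shows "has_bochner_integral (chan_law l1 l2) (\<lambda>z. f (fst z) * g (snd z)) (a * b)"
proof (rule has_bochner_integral_nn_integral)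
  have "(\<lambda>z. f (fst z) * g (snd z)) \<in> borel_measurable (borel \<Otimes>\<^sub>M borel)" using f g by measurable
  then show "(\<lambda>z. f (fst z) * g (snd z)) \<in> borel_measurable (chan_law l1 l2)" by (rule meas_chan)
  show "AE x in chan_law l1 l2. 0 \<le> f (fst x) * g (snd x)" using fn gn by simp
  show "0 \<le> a * b" using a b by simp
  have "(\<integral>\<^sup>+z. ennreal (f (fst z) * g (snd z)) \<partial>chan_law l1 l2)
     = (\<integral>\<^sup>+z. ennreal (f (fst z)) * ennreal (g (snd z)) \<partial>chan_law l1 l2)"
    using fn gn by (simp add: ennreal_mult)
  also have "\<dots> = ennreal a * ennreal b"
    using prod_nn[OF l1 l2, of "\<lambda>x. ennreal (f x)" "\<lambda>y. ennreal (g y)"] f g If Ig by simp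
  also have "\<dots> = ennreal (a * b)" using a b by (simp add: ennreal_mult)
  finally show "(\<integral>\<^sup>+z. ennreal (f (fst z) * g (snd z)) \<partial>chan_law l1 l2) = ennreal (a * b)" .
qed

lemma EM_one: "l > 0 \<Longrightarrow> (\<integral>\<^sup>+x. ennreal 1 \<partial>EM l) = ennreal 1"
  using prob_space.emeasure_space_1[OF EM_prob] by simp

theorem lemma2:
  fixes l1 l2 :: real
  assumes "l1 \<ge> l2" and "l2 > 0"
  shows "\<exists>C0 > 0. \<forall>P > 0. \<forall>\<Delta> > 0. \<forall>T :: nat.
           integrable (chan_law l1 l2) (\<lambda>(h1, h2). r_loss P T \<Delta> h1 h2) \<and>
           (\<integral>(h1, h2). r_loss P T \<Delta> h1 h2 \<partial>chan_law l1 l2)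
             \<le> log 2 (1 + C0 * P * max (exp (- real T * \<Delta> / l1)) \<Delta>)"
proof -
  have l2: "l2 > 0" using assms by simp
  have l1: "l1 > 0" using assms by simp
  define C0 where "C0 = 2 + 2 * l1"
  have C0: "C0 > 0" using l1 C0_def by simp
  have main: "integrable (chan_law l1 l2) (\<lambda>(h1, h2). r_loss P T \<Delta> h1 h2) \<and>
           (\<integral>(h1, h2). r_loss P T \<Delta> h1 h2 \<partial>chan_law l1 l2)
             \<le> log 2 (1 + C0 * P * max (exp (- real T * \<Delta> / l1)) \<Delta>)"
    if P: "P > 0" and D: "\<Delta> > 0" for P \<Delta> :: real and T :: nat
  proof -
    define M where "M = chan_law l1 l2"
    define t where "t = real T * \<Delta>"
    have t0: "t \<ge> 0" using D t_def by simp
    interpret M: prob_space M unfolding M_def chan_law_def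
      by (intro prob_space_pair EM_prob l1 l2)
    define f where "f = (\<lambda>(h1, h2). r_loss P T \<Delta> h1 h2)"
    have fz: "\<And>z. f z = r_loss P T \<Delta> (fst z) (snd z)" unfolding f_def by (simp add: case_prod_beta)
    define gg where "gg = (\<lambda>z. gfun T \<Delta> (fst z) (snd z))"
    have fm: "f \<in> borel_measurable M" unfolding M_def f_def by (intro meas_chan rl_meas)
    have gm: "gg \<in> borel_measurable M" unfolding M_def gg_def by (intro meas_chan g_meas)
    have pos: "AE z in M. fst z > 0 \<and> snd z > 0" unfolding M_def by (rule AE_pos[OF l1 l2])
    have hb1: "has_bochner_integral M (\<lambda>z. \<bar>fst z\<bar> * 1) (l1 * 1)"
      unfolding M_def using l1 l2 EM_abs[OF l1] EM_one[OF l2]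
      by (intro hb_nn) auto
    have hb2: "has_bochner_integral M (\<lambda>z. 1 * \<bar>snd z\<bar>) (1 * l2)"
      unfolding M_def using l1 l2 EM_abs[OF l2] EM_one[OF l1]
      by (intro hb_nn) auto
    have hb3: "has_bochner_integral M (\<lambda>z. indicator {t<..} (fst z) * \<bar>snd z\<bar>) (exp (- t / l1) * l2)"
      unfolding M_def using l1 l2 EM_abs[OF l2] EM_tail[OF l1 t0]
      by (intro hb_nn) auto
    have hb4: "has_bochner_integral M (\<lambda>z. \<bar>fst z\<bar> * indicator {t<..} (snd z)) (l1 * exp (- t / l2))"
      unfolding M_def using l1 l2 EM_abs[OF l1] EM_tail[OF l2 t0]
      by (intro hb_nn) auto
    have i1: "integrable M (\<lambda>z. \<bar>fst z\<bar>)" using integrable.intros[OF hb1] by simp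
    have i2: "integrable M (\<lambda>z. \<bar>snd z\<bar>)" using integrable.intros[OF hb2] by simp
    define G where "G = (\<lambda>z. P * (\<bar>fst z\<bar> + \<bar>snd z\<bar>) / ln 2)"
    have iG: "integrable M G" unfolding G_def using i1 i2 by (intro integrable_divide integrable_mult_right Bochner_Integration.integrable_add)
    have pwz: "AE z in M. \<bar>f z\<bar> \<le> P * (fst z + snd z) / ln 2 \<and> f z \<le> log 2 (1 + P * gg z)"
      using pos by eventually_elim (use pw[OF P D] in \<open>auto simp: fz gg_def\<close>)
    have intf: "integrable M f"
    proof (rule Bochner_Integration.integrable_bound[OF iG fm])
      show "AE x in M. norm (f x) \<le> norm (G x)"
        using pwz pos by eventually_elim (use P in \<open>auto simp: G_def abs_mult\<close>)
    qed
    define m where "m = 2 * \<Delta> + exp (- t / l1) * l2 + l1 * exp (- t / l2)"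
    have hbg: "has_bochner_integral M gg m"
    proof -
      have "has_bochner_integral M (\<lambda>z. 2 * \<Delta> + indicator {t<..} (fst z) * \<bar>snd z\<bar> + \<bar>fst z\<bar> * indicator {t<..} (snd z)) m"
      proof -
        have c: "has_bochner_integral M (\<lambda>z. 2 * \<Delta>) (2 * \<Delta>)"
          using has_bochner_integral_integrable[OF M.integrable_const[of "2 * \<Delta>"]] M.prob_space by simp
        show ?thesis unfolding m_def by (intro has_bochner_integral_add c hb3 hb4)
      qed
      moreover have "gg = (\<lambda>z. 2 * \<Delta> + indicator {t<..} (fst z) * \<bar>snd z\<bar> + \<bar>fst z\<bar> * indicator {t<..} (snd z))"
        unfolding gg_def gfun_def t_def by (simp add: fun_eq_iff mult.commute)
      ultimately show ?thesis by simp
    qed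
    have m0: "m \<ge> 0" unfolding m_def using D l1 l2 by simp
    define c where "c = log 2 (1 + P * m)"
    define k where "k = P / ((1 + P * m) * ln 2)"
    have bnd: "AE z in M. f z \<le> c + k * (gg z - m)"
      using pwz
    proof eventually_elim
      case (elim z)
      have g0: "gg z \<ge> 0" unfolding gg_def gfun_def using D by simp
      have "log 2 (1 + P * gg z) \<le> log 2 (1 + P * m) + (P * gg z - P * m) / ((1 + P * m) * ln 2)"
        using g0 m0 P by (intro tangent_log2) auto
      also have "\<dots> = c + k * (gg z - m)" unfolding c_def k_def by (simp add: algebra_simps add_divide_distrib diff_divide_distrib)
      finally show ?case using elim by simp
    qed
    have hbR: "has_bochner_integral M (\<lambda>z. c + k * (gg z - m)) (c + k * (m - m))"
    proof -
      have c1: "has_bochner_integral M (\<lambda>z. c) c"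
        using has_bochner_integral_integrable[OF M.integrable_const[of "c"]] M.prob_space by simp
      have c2: "has_bochner_integral M (\<lambda>z. m) m"
        using has_bochner_integral_integrable[OF M.integrable_const[of "m"]] M.prob_space by simp
      show ?thesis by (intro has_bochner_integral_add c1 has_bochner_integral_mult_right has_bochner_integral_diff hbg c2)
    qed
    have "integral\<^sup>L M f \<le> integral\<^sup>L M (\<lambda>z. c + k * (gg z - m))"
      by (intro integral_mono_AE intf bnd integrable.intros[OF hbR])
    also have "\<dots> = c" using has_bochner_integral_integral_eq[OF hbR] by simp
    also have "c \<le> log 2 (1 + C0 * P * max (exp (- real T * \<Delta> / l1)) \<Delta>)"
    proof -
      define e where "e = max (exp (- real T * \<Delta> / l1)) \<Delta>"
      have ee: "exp (- t / l1) \<le> e" unfolding e_def t_def by simp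
      have De: "\<Delta> \<le> e" unfolding e_def by simp
      have "t / l1 \<le> t / l2" using t0 l2 assms(1) by (intro divide_left_mono) auto
      then have "exp (- t / l2) \<le> exp (- t / l1)" by simp
      then have "exp (- t / l2) \<le> e" using ee by linarith
      then have e2: "l1 * exp (- t / l2) \<le> l1 * e" using l1 by (intro mult_left_mono) auto
      have e1: "exp (- t / l1) * l2 \<le> e * l1" using ee assms(1) l2 De D by (intro mult_mono) auto
      have "m \<le> C0 * e" unfolding m_def C0_def using e1 e2 De by (simp add: algebra_simps)
      then have "P * m \<le> C0 * P * e" using P by (simp add: mult_left_mono mult.commute mult.left_commute)
      then show ?thesis unfolding c_def e_def[symmetric] using P m0 by (intro log2_mono1) auto
    qed
    finally show ?thesis using intf unfolding M_def f_def by simp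
  qed
  show ?thesis using C0 main by blast
qed


end
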